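(* Let $Q \ll P$ be probability measures on a Polish space $\mathcal{X}$ with $r = dQ/dP$ and $L = D_{KL}(Q\|P) < \infty$. Let $\varphi \in L^2(Q)$, let $t \ge 0$ be such that $n = 2^{L+t}$ is a positive integer, and let $X_1, \dots, X_n$ be i.i.d. $P$-distributed. Define $I(\varphi) = \int_{\mathcal{X}} \varphi\, dQ$ and $I_n(\varphi) = \frac{1}{n}\sum_{i=1}^n \varphi(X_i) r(X_i)$. Then $$\mathbb{E}\big[|I_n(\varphi) - I(\varphi)|\big] \le \|\varphi\|_{L^2(Q)}\Big(2^{-t/4} + 2\sqrt{S_P(2^{L+t/2})}\Big).$$
   Context: $D_{KL}(Q\|P) = \mathbb{E}_{X\sim Q}[\log_2 r(X)]$. Define $w_P(h) = \mathbb{P}_{X\sim P}[r(X) \ge h]$, $W_P(h) = \int_0^h w_P(\eta)\,d\eta$ and $S_P(h) = 1 - W_P(h)$. *)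

theory Defs
  imports "HOL-Probability.Probability"
begin

text \<open>Density ratio r = dQ/dP (real-valued version of the Radon-Nikodym derivative).\<close>
definition rdens :: "'a measure \<Rightarrow> 'a measure \<Rightarrow> 'a \<Rightarrow> real" where
  "rdens P Q = (\<lambda>x. enn2real (RN_deriv P Q x))"

definition wP :: "'a measure \<Rightarrow> 'a measure \<Rightarrow> real \<Rightarrow> real" where
  "wP P Q h = measure P {x \<in> space P. rdens P Q x \<ge> h}"

definition WP :: "'a measure \<Rightarrow> 'a measure \<Rightarrow> real \<Rightarrow> real" where
  "WP P Q h = (LBINT \<eta>=0..h. wP P Q \<eta>)"

definition SP :: "'a measure \<Rightarrow> 'a measure \<Rightarrow> real \<Rightarrow> real" where
  "SP P Q h = 1 - WP P Q h"

end

theory Submission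
  imports Defs
begin

lemma amgm_bound:
  fixes X V K :: real
  assumes "V \<ge> 0" "K \<ge> 0" "\<And>s. s > 0 \<Longrightarrow> X \<le> (s * V + K / s) / 2"
  shows "X \<le> sqrt (V * K)"
proof (cases "V > 0 \<and> K > 0")
  case True
  define s where "s = sqrt K / sqrt V"
  have s: "s > 0" using True by (simp add: s_def)
  have "s * V = sqrt K * sqrt V" using True unfolding s_def
    by (simp add: field_simps)
  moreover have "K / s = sqrt K * sqrt V" using True unfolding s_def
    by (simp add: field_simps)
  ultimately show ?thesis using assms(3)[OF s] by (simp add: real_sqrt_mult mult.commute)
next
  case False
  show ?thesis
  proof (rule ccontr)
    assume "\<not> ?thesis"
    moreover have "sqrt (V*K) \<ge> 0" using assms(1,2) by simp
    ultimately have X: "X > 0" by linarith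
    show False
    proof (cases "V = 0")
      case True
      define s where "s = 2 * K / X + 1"
      have "2 * K / X \<ge> 0" using X assms by simp
      hence s: "s > 0" unfolding s_def by linarith
      have "K < X * s / 2" using X assms unfolding s_def by (simp add: field_simps)
      hence "K / s < X / 2" using s by (simp add: field_simps)
      moreover have "K / s \<ge> 0" using s assms(2) by simp
      ultimately show False using assms(3)[OF s] True X by simp
    next
      case False
      hence K: "K = 0" using \<open>\<not> (V > 0 \<and> K > 0)\<close> assms by linarith
      define s where "s = X / (V + 1)"
      have s: "s > 0" using X assms by (simp add: s_def)
      have "V / (V + 1) \<le> 1" using assms(1) by simp
      hence "X * (V / (V + 1)) \<le> X" using X mult_left_le[of "V/(V+1)" X] by simp
      hence "s * V < 2 * X" using X unfolding s_def by simp
      thus False using assms(3)[OF s] K X by simp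
    qed
  qed
qed
lemma amgm_pt:
  fixes x s :: real assumes "s > 0"
  shows "\<bar>x\<bar> \<le> (s * x\<^sup>2 + 1 / s) / 2"
proof -
  have "0 \<le> (s * \<bar>x\<bar> - 1)\<^sup>2" by simp
  also have "(s * \<bar>x\<bar> - 1)\<^sup>2 = s * (s * x\<^sup>2 + 1 / s) - 2 * s * \<bar>x\<bar>"
    using assms by (simp add: power2_eq_square field_simps)
  finally have "2 * s * \<bar>x\<bar> \<le> s * (s * x\<^sup>2 + 1 / s)" by simp
  hence "s * (2 * \<bar>x\<bar>) \<le> s * (s * x\<^sup>2 + 1 / s)" by (simp add: mult.assoc mult.left_commute)
  hence "2 * \<bar>x\<bar> \<le> s * x\<^sup>2 + 1 / s" using assms by (simp add: mult_le_cancel_left_pos)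
  thus ?thesis by simp
qed
lemma (in prob_space) PiM_pair:
  fixes f h :: "'a \<Rightarrow> real"
  assumes "finite I" "i \<in> I" "j \<in> I" "integrable M f" "integrable M h" "integrable M (\<lambda>x. f x * h x)"
  shows "integrable (PiM I (\<lambda>_. M)) (\<lambda>\<omega>. f (\<omega> i) * h (\<omega> j))"
    and "(\<integral>\<omega>. f (\<omega> i) * h (\<omega> j) \<partial>PiM I (\<lambda>_. M)) =
           (if i = j then (\<integral>x. f x * h x \<partial>M) else (\<integral>x. f x \<partial>M) * (\<integral>x. h x \<partial>M))"
proof -
  interpret PS: product_prob_space "\<lambda>_. M" I
    by unfold_locales
  define F where "F = (\<lambda>k. if k = i \<and> k = j then (\<lambda>x. f x * h x) else if k = i then f
      else if k = j then h else (\<lambda>_. 1::real))"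
  have eq: "(\<Prod>k\<in>I. F k (\<omega> k)) = f (\<omega> i) * h (\<omega> j)" for \<omega>
  proof (cases "i = j")
    case True
    have "(\<Prod>k\<in>I. F k (\<omega> k)) = F i (\<omega> i) * (\<Prod>k\<in>I-{i}. F k (\<omega> k))"
      using assms by (simp add: prod.remove)
    also have "(\<Prod>k\<in>I-{i}. F k (\<omega> k)) = 1"
      by (rule prod.neutral) (auto simp: F_def True)
    finally show ?thesis using True by (simp add: F_def)
  next
    case False
    have "(\<Prod>k\<in>I. F k (\<omega> k)) = F i (\<omega> i) * (\<Prod>k\<in>I-{i}. F k (\<omega> k))"
      using assms by (simp add: prod.remove)
    also have "(\<Prod>k\<in>I-{i}. F k (\<omega> k)) = F j (\<omega> j) * (\<Prod>k\<in>I-{i}-{j}. F k (\<omega> k))"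
      using assms False by (intro prod.remove) auto
    also have "(\<Prod>k\<in>I-{i}-{j}. F k (\<omega> k)) = 1"
      by (rule prod.neutral) (auto simp: F_def)
    finally show ?thesis using False by (simp add: F_def)
  qed
  have int: "\<And>k. k \<in> I \<Longrightarrow> integrable M (F k)" using assms by (auto simp: F_def)
  show "integrable (PiM I (\<lambda>_. M)) (\<lambda>\<omega>. f (\<omega> i) * h (\<omega> j))"
    using PS.product_integrable_prod[of I F, OF assms(1) int] unfolding eq .
  have "(\<integral>\<omega>. f (\<omega> i) * h (\<omega> j) \<partial>PiM I (\<lambda>_. M)) = (\<Prod>k\<in>I. integral\<^sup>L M (F k))"
    using PS.product_integral_prod[of I F, OF assms(1) int] unfolding eq .
  also have "\<dots> = (if i = j then (\<integral>x. f x * h x \<partial>M) else (\<integral>x. f x \<partial>M) * (\<integral>x. h x \<partial>M))"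
  proof (cases "i = j")
    case True
    have "(\<Prod>k\<in>I. integral\<^sup>L M (F k)) = integral\<^sup>L M (F i) * (\<Prod>k\<in>I-{i}. integral\<^sup>L M (F k))"
      using assms by (simp add: prod.remove)
    also have "(\<Prod>k\<in>I-{i}. integral\<^sup>L M (F k)) = 1"
      by (rule prod.neutral) (auto simp: F_def True prob_space)
    finally show ?thesis using True by (simp add: F_def)
  next
    case False
    have "(\<Prod>k\<in>I. integral\<^sup>L M (F k)) = integral\<^sup>L M (F i) * (\<Prod>k\<in>I-{i}. integral\<^sup>L M (F k))"
      using assms by (simp add: prod.remove)
    also have "(\<Prod>k\<in>I-{i}. integral\<^sup>L M (F k)) = integral\<^sup>L M (F j) * (\<Prod>k\<in>I-{i}-{j}. integral\<^sup>L M (F k))"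
      using assms False by (intro prod.remove) auto
    also have "(\<Prod>k\<in>I-{i}-{j}. integral\<^sup>L M (F k)) = 1"
      by (rule prod.neutral) (auto simp: F_def prob_space)
    finally show ?thesis using False by (simp add: F_def)
  qed
  finally show "(\<integral>\<omega>. f (\<omega> i) * h (\<omega> j) \<partial>PiM I (\<lambda>_. M)) =
           (if i = j then (\<integral>x. f x * h x \<partial>M) else (\<integral>x. f x \<partial>M) * (\<integral>x. h x \<partial>M))" .
qed

lemma (in prob_space) layer_cake_min:
  fixes r :: "'a \<Rightarrow> real" and a :: real
  assumes rm[measurable]: "r \<in> borel_measurable M" and r0: "\<And>x. r x \<ge> 0" and a0: "a \<ge> 0"
  shows "(LBINT \<eta>=0..a. measure M {x \<in> space M. r x \<ge> \<eta>}) = (\<integral>x. min (r x) a \<partial>M)"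
proof -
  define w where "w = (\<lambda>\<eta>. measure M {x \<in> space M. r x \<ge> \<eta>})"
  have wmono: "mono (\<lambda>\<eta>. - w \<eta>)"
    unfolding mono_def w_def by (auto intro!: finite_measure_mono)
  have wm[measurable]: "w \<in> borel_measurable borel"
  proof -
    have "(\<lambda>\<eta>. - (- w \<eta>)) \<in> borel_measurable borel"
      using borel_measurable_mono[OF wmono] by measurable
    thus ?thesis by simp
  qed
  have w01: "0 \<le> w \<eta> \<and> w \<eta> \<le> 1" for \<eta> unfolding w_def by simp
  have int1: "integrable M (\<lambda>x. min (r x) a)"
    by (rule integrable_const_bound[where B=a]) (use r0 a0 in auto)
  have int2: "integrable lborel (\<lambda>\<eta>. indicator {0..a} \<eta> * w \<eta>)"
  proof -
    have ii: "integrable lborel (\<lambda>\<eta>. indicator {0..a} \<eta> :: real)" by (rule integrable_real_indicator) (use a0 in auto)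
    show ?thesis by (rule Bochner_Integration.integrable_bound[OF ii]) (auto simp: w01 abs_le_iff indicator_def)
  qed
  interpret PSF: pair_sigma_finite M lborel by unfold_locales
  have "ennreal (\<integral>x. min (r x) a \<partial>M) = (\<integral>\<^sup>+x. ennreal (min (r x) a) \<partial>M)"
    by (rule nn_integral_eq_integral[symmetric]) (use int1 r0 a0 in auto)
  also have "\<dots> = (\<integral>\<^sup>+x. (\<integral>\<^sup>+\<eta>. indicator {(x, \<eta>). 0 \<le> \<eta> \<and> \<eta> \<le> a \<and> \<eta> \<le> r x} (x, \<eta>) \<partial>lborel) \<partial>M)"
  proof (rule nn_integral_cong)
    fix x
    have "(\<lambda>\<eta>. indicator {(x, \<eta>). 0 \<le> \<eta> \<and> \<eta> \<le> a \<and> \<eta> \<le> r x} (x, \<eta>) :: ennreal)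
        = indicator {0..min (r x) a}" by (auto simp: indicator_def fun_eq_iff)
    then show "ennreal (min (r x) a) = (\<integral>\<^sup>+\<eta>. indicator {(x, \<eta>). 0 \<le> \<eta> \<and> \<eta> \<le> a \<and> \<eta> \<le> r x} (x, \<eta>) \<partial>lborel)"
      using r0[of x] a0 by simp
  qed
  also have "\<dots> = (\<integral>\<^sup>+\<eta>. (\<integral>\<^sup>+x. indicator {(x, \<eta>). 0 \<le> \<eta> \<and> \<eta> \<le> a \<and> \<eta> \<le> r x} (x, \<eta>) \<partial>M) \<partial>lborel)"
    by (rule PSF.Fubini'[symmetric]) measurable
  also have "\<dots> = (\<integral>\<^sup>+\<eta>. ennreal (indicator {0..a} \<eta> * w \<eta>) \<partial>lborel)"
  proof (rule nn_integral_cong)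
    fix \<eta> :: real
    show "(\<integral>\<^sup>+x. indicator {(x, \<eta>). 0 \<le> \<eta> \<and> \<eta> \<le> a \<and> \<eta> \<le> r x} (x, \<eta>) \<partial>M) = ennreal (indicator {0..a} \<eta> * w \<eta>)"
    proof -
      have "(\<integral>\<^sup>+x. indicator {(x, \<eta>). 0 \<le> \<eta> \<and> \<eta> \<le> a \<and> \<eta> \<le> r x} (x, \<eta>) \<partial>M)
          = (\<integral>\<^sup>+x. indicator {0..a} \<eta> * indicator {x \<in> space M. r x \<ge> \<eta>} x \<partial>M)"
        by (rule nn_integral_cong) (auto simp: indicator_def)
      also have "\<dots> = indicator {0..a} \<eta> * emeasure M {x \<in> space M. r x \<ge> \<eta>}"
        by (rule nn_integral_cmult_indicator) measurable
      also have "\<dots> = ennreal (indicator {0..a} \<eta> * w \<eta>)"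
        by (simp add: w_def emeasure_eq_measure indicator_def)
      finally show ?thesis .
    qed
  qed
  also have "\<dots> = ennreal (\<integral>\<eta>. indicator {0..a} \<eta> * w \<eta> \<partial>lborel)"
    by (rule nn_integral_eq_integral) (use int2 w01 in \<open>auto simp: indicator_def\<close>)
  also have "(\<integral>\<eta>. indicator {0..a} \<eta> * w \<eta> \<partial>lborel) = (LBINT \<eta>=0..a. w \<eta>)"
  proof -
    have "(LBINT \<eta>=0..a. w \<eta>) = (LBINT \<eta>:{0..a}. w \<eta>)"
      using interval_integral_Icc[of 0 a w] a0 by (simp add: zero_ereal_def)
    then show ?thesis by (simp add: set_lebesgue_integral_def)
  qed
  finally have "ennreal (\<integral>x. min (r x) a \<partial>M) = ennreal (LBINT \<eta>=0..a. w \<eta>)" .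
  moreover have "(\<integral>x. min (r x) a \<partial>M) \<ge> 0" using r0 a0 by simp
  moreover have "(\<integral>\<eta>. indicator {0..a} \<eta> * w \<eta> \<partial>lborel) \<ge> 0"
    using w01 by (intro integral_nonneg_AE) (auto simp: indicator_def)
  ultimately show ?thesis
    using \<open>(\<integral>\<eta>. indicator {0..a} \<eta> * w \<eta> \<partial>lborel) = (LBINT \<eta>=0..a. w \<eta>)\<close>
    unfolding w_def by (simp add: ennreal_inj)
qed

lemma (in prob_space) avg_abs_bound:
  fixes G :: "'a \<Rightarrow> real" and n :: nat
  assumes n: "n > 0" and Gi: "integrable M G" and G2: "integrable M (\<lambda>x. (G x)\<^sup>2)" and G0: "(\<integral>x. G x \<partial>M) = 0"
  shows "integrable (PiM {..<n} (\<lambda>_. M)) (\<lambda>\<omega>. (1 / real n) * (\<Sum>i<n. G (\<omega> i)))"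
    and "(\<integral>\<omega>. \<bar>(1 / real n) * (\<Sum>i<n. G (\<omega> i))\<bar> \<partial>PiM {..<n} (\<lambda>_. M)) \<le> sqrt ((\<integral>x. (G x)\<^sup>2 \<partial>M) / real n)"
proof -
  let ?M = "PiM {..<n} (\<lambda>_. M)"
  interpret PS: product_prob_space "\<lambda>_. M" "{..<n}" by unfold_locales
  have GG: "integrable M (\<lambda>x. G x * G x)" using G2 by (simp add: power2_eq_square)
  have one: "integrable M (\<lambda>x. G x * 1)" using Gi by simp
  have int1: "integrable ?M (\<lambda>\<omega>. G (\<omega> i))" and e1: "(\<integral>\<omega>. G (\<omega> i) \<partial>?M) = 0" if "i < n" for i
    using PiM_pair[of "{..<n}" i i G "\<lambda>_. 1", OF _ _ _ Gi _ one] that G0 by simp_all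
  have int2: "integrable ?M (\<lambda>\<omega>. G (\<omega> i) * G (\<omega> j))"
     and e2: "(\<integral>\<omega>. G (\<omega> i) * G (\<omega> j) \<partial>?M) = (if i = j then (\<integral>x. (G x)\<^sup>2 \<partial>M) else 0)"
    if "i < n" "j < n" for i j
    using PiM_pair[of "{..<n}" i j G G, OF _ _ _ Gi Gi GG] that G0 by (simp_all add: power2_eq_square)
  define A where "A = (\<lambda>\<omega>. (1 / real n) * (\<Sum>i<n. G (\<omega> i)))"
  show intA: "integrable ?M A" unfolding A_def by (intro integrable_mult_right Bochner_Integration.integrable_sum int1) auto
  have A2: "(A \<omega>)\<^sup>2 = (1 / real n)\<^sup>2 * (\<Sum>i<n. \<Sum>j<n. G (\<omega> i) * G (\<omega> j))" for \<omega>
    unfolding A_def by (simp add: power2_eq_square sum_product)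
  have intA2: "integrable ?M (\<lambda>\<omega>. (A \<omega>)\<^sup>2)" unfolding A2 by (intro integrable_mult_right Bochner_Integration.integrable_sum int2) auto
  have "(\<integral>\<omega>. (A \<omega>)\<^sup>2 \<partial>?M) = (1 / real n)\<^sup>2 * (\<Sum>i<n. \<Sum>j<n. (\<integral>\<omega>. G (\<omega> i) * G (\<omega> j) \<partial>?M))"
  proof -
    have S1: "(\<integral>\<omega>. (\<Sum>j<n. G (\<omega> i) * G (\<omega> j)) \<partial>?M) = (\<Sum>j<n. (\<integral>\<omega>. G (\<omega> i) * G (\<omega> j) \<partial>?M))"
      if "i < n" for i by (rule Bochner_Integration.integral_sum) (use int2 that in auto)
    have "(\<integral>\<omega>. (\<Sum>i<n. \<Sum>j<n. G (\<omega> i) * G (\<omega> j)) \<partial>?M) = (\<Sum>i<n. (\<integral>\<omega>. (\<Sum>j<n. G (\<omega> i) * G (\<omega> j)) \<partial>?M))"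
      by (rule Bochner_Integration.integral_sum) (intro Bochner_Integration.integrable_sum int2; auto)
    also have "\<dots> = (\<Sum>i<n. \<Sum>j<n. (\<integral>\<omega>. G (\<omega> i) * G (\<omega> j) \<partial>?M))"
      by (rule sum.cong) (auto simp: S1)
    finally show ?thesis unfolding A2 by simp
  qed
  also have "\<dots> = (1 / real n)\<^sup>2 * (\<Sum>i<n. (\<integral>x. (G x)\<^sup>2 \<partial>M))"
  proof -
    have "(\<Sum>j<n. (\<integral>\<omega>. G (\<omega> i) * G (\<omega> j) \<partial>?M)) = (\<Sum>j<n. (if i = j then (\<integral>x. (G x)\<^sup>2 \<partial>M) else 0))"
      if "i < n" for i by (rule sum.cong) (use e2 that in auto)
    also have "\<dots> i = (\<integral>x. (G x)\<^sup>2 \<partial>M)" if "i < n" for i using that by (simp add: sum.delta)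
    finally show ?thesis by simp
  qed
  also have "\<dots> = (\<integral>x. (G x)\<^sup>2 \<partial>M) / real n" using n by (simp add: power2_eq_square)
  finally have EA2: "(\<integral>\<omega>. (A \<omega>)\<^sup>2 \<partial>?M) = (\<integral>x. (G x)\<^sup>2 \<partial>M) / real n" .
  have "(\<integral>\<omega>. \<bar>A \<omega>\<bar> \<partial>?M) \<le> sqrt ((\<integral>\<omega>. (A \<omega>)\<^sup>2 \<partial>?M) * 1)"
  proof (rule amgm_bound)
    show "0 \<le> (\<integral>\<omega>. (A \<omega>)\<^sup>2 \<partial>?M)" by simp
    fix s :: real assume s: "s > 0"
    have "(\<integral>\<omega>. \<bar>A \<omega>\<bar> \<partial>?M) \<le> (\<integral>\<omega>. (s * (A \<omega>)\<^sup>2 + 1 / s) / 2 \<partial>?M)"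
      by (rule integral_mono) (use intA intA2 amgm_pt[OF s] in auto)
    also have "\<dots> = (s * (\<integral>\<omega>. (A \<omega>)\<^sup>2 \<partial>?M) + 1 / s) / 2"
      using intA2 by (simp add: PS.P.prob_space)
    finally show "(\<integral>\<omega>. \<bar>A \<omega>\<bar> \<partial>?M) \<le> (s * (\<integral>\<omega>. (A \<omega>)\<^sup>2 \<partial>?M) + 1 / s) / 2" .
  qed simp
  thus "(\<integral>\<omega>. \<bar>(1 / real n) * (\<Sum>i<n. G (\<omega> i))\<bar> \<partial>?M) \<le> sqrt ((\<integral>x. (G x)\<^sup>2 \<partial>M) / real n)"
    using EA2 unfolding A_def by simp
qed

theorem theorem3:
  fixes P Q :: "'a::polish_space measure"
    and \<phi> :: "'a \<Rightarrow> real" and t :: real and n :: nat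
  assumes "prob_space P" and "prob_space Q"
    and "sets P = sets borel" and "sets Q = sets borel"
    and "absolutely_continuous P Q"
    and "integrable Q (entropy_density 2 P Q)"
    and "\<phi> \<in> borel_measurable borel"
    and "integrable Q (\<lambda>x. (\<phi> x)\<^sup>2)"
    and "t \<ge> 0" and "n > 0"
    and "real n = 2 powr (KL_divergence 2 P Q + t)"
  shows "(\<integral>\<^sup>+ \<omega>. ennreal \<bar>(1 / real n) * (\<Sum>i<n. \<phi> (\<omega> i) * rdens P Q (\<omega> i))
              - (\<integral>x. \<phi> x \<partial>Q)\<bar> \<partial>(PiM {..<n} (\<lambda>_. P)))
         \<le> ennreal (sqrt (\<integral>x. (\<phi> x)\<^sup>2 \<partial>Q) *
              (2 powr (- t / 4) + 2 * sqrt (SP P Q (2 powr (KL_divergence 2 P Q + t / 2)))))"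
proof -
  interpret P: prob_space P by fact
  interpret Q: prob_space Q by fact
  note sPQ = assms(3) assms(4)
  have sQP: "sets Q = sets P" using sPQ by simp
  have ac: "absolutely_continuous P Q" by fact
  have sfQ: "sigma_finite_measure Q" by unfold_locales
  define L where "L = KL_divergence 2 P Q"
  define r where "r = rdens P Q"
  define a where "a = 2 powr (L + t / 2)"
  have a0: "a > 0" unfolding a_def by simp
  have rm[measurable]: "r \<in> borel_measurable P" unfolding r_def rdens_def by measurable
  have r0: "r x \<ge> 0" for x unfolding r_def rdens_def by simp
  have phiP[measurable]: "\<phi> \<in> borel_measurable P"
    using assms(7) by (subst measurable_cong_sets[OF assms(3) refl])
  have phiQ[measurable]: "\<phi> \<in> borel_measurable Q"
    using assms(7) by (subst measurable_cong_sets[OF assms(4) refl])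
  have phi2Q: "integrable Q (\<lambda>x. (\<phi> x)\<^sup>2)" by fact
  have phiQi: "integrable Q \<phi>" by (rule Q.square_integrable_imp_integrable[OF phiQ phi2Q])
  have RNi: "integrable Q f \<longleftrightarrow> integrable P (\<lambda>x. r x * f x)" if "f \<in> borel_measurable P" for f
    using P.RN_deriv_integrable[OF sfQ ac sQP that] unfolding r_def rdens_def .
  have RNe: "(\<integral>x. f x \<partial>Q) = (\<integral>x. r x * f x \<partial>P)" if "f \<in> borel_measurable P" for f
    using P.RN_deriv_integral[OF sfQ ac sQP that] unfolding r_def rdens_def .
  define V where "V = (\<integral>x. (\<phi> x)\<^sup>2 \<partial>Q)"
  have V0: "V \<ge> 0" unfolding V_def by simp
  have rphi2: "integrable P (\<lambda>x. r x * (\<phi> x)\<^sup>2)" using RNi[of "\<lambda>x. (\<phi> x)\<^sup>2"] phi2Q by simp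
  have V_eq: "V = (\<integral>x. r x * (\<phi> x)\<^sup>2 \<partial>P)" unfolding V_def by (rule RNe) simp
  have rphi: "integrable P (\<lambda>x. r x * \<phi> x)" using RNi[of \<phi>] phiQi by simp
  have mu_eq: "(\<integral>x. \<phi> x \<partial>Q) = (\<integral>x. r x * \<phi> x \<partial>P)" by (rule RNe) simp
  have ri: "integrable P r" using RNi[of "\<lambda>_. 1"] by simp
  have r1: "(\<integral>x. r x \<partial>P) = 1" using RNe[of "\<lambda>_. 1"] by (simp add: Q.prob_space)
  define g where "g x = \<phi> x * min (r x) a" for x
  define e where "e x = \<phi> x * max (r x - a) 0" for x
  have ge: "r x * \<phi> x = g x + e x" for x
    unfolding g_def e_def by (cases "r x \<le> a") (auto simp: algebra_simps min_def max_def)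
  have gm[measurable]: "g \<in> borel_measurable P" unfolding g_def by measurable
  have em[measurable]: "e \<in> borel_measurable P" unfolding e_def by measurable
  have g2b: "(g x)\<^sup>2 \<le> a * (r x * (\<phi> x)\<^sup>2)" for x
  proof -
    have "min (r x) a * min (r x) a \<le> a * r x"
      using mult_mono[of "min (r x) a" a "min (r x) a" "r x"] a0 r0[of x] by (simp add: mult.commute)
    hence "(\<phi> x)\<^sup>2 * (min (r x) a * min (r x) a) \<le> (\<phi> x)\<^sup>2 * (a * r x)"
      by (rule mult_left_mono) simp
    thus ?thesis unfolding g_def by (simp add: power2_eq_square algebra_simps)
  qed
  have g2i: "integrable P (\<lambda>x. (g x)\<^sup>2)"
  proof (rule Bochner_Integration.integrable_bound[OF integrable_mult_right[OF rphi2, of a]])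
    show "AE x in P. norm ((g x)\<^sup>2) \<le> norm (a * (r x * (\<phi> x)\<^sup>2))"
      using g2b a0 r0 by (auto intro!: AE_I2 simp: abs_mult)
  qed simp
  have gi: "integrable P g" by (rule P.square_integrable_imp_integrable[OF gm g2i])
  have ei: "integrable P e"
  proof -
    have "integrable P (\<lambda>x. r x * \<phi> x - g x)" using rphi gi by simp
    moreover have "(\<lambda>x. r x * \<phi> x - g x) = e" using ge by (simp add: fun_eq_iff)
    ultimately show ?thesis by simp
  qed
  have Eg2: "(\<integral>x. (g x)\<^sup>2 \<partial>P) \<le> a * V"
  proof -
    have "(\<integral>x. (g x)\<^sup>2 \<partial>P) \<le> (\<integral>x. a * (r x * (\<phi> x)\<^sup>2) \<partial>P)"
      by (rule integral_mono[OF g2i integrable_mult_right[OF rphi2] g2b])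
    also have "\<dots> = a * V" using V_eq by simp
    finally show ?thesis .
  qed
  define m where "m = (\<integral>x. g x \<partial>P)"
  define G where "G x = g x - m" for x
  have Gi: "integrable P G" unfolding G_def using gi by simp
  have G2e: "(G x)\<^sup>2 = (g x)\<^sup>2 - 2 * m * g x + m\<^sup>2" for x unfolding G_def by (simp add: power2_eq_square algebra_simps)
  have G2i: "integrable P (\<lambda>x. (G x)\<^sup>2)" unfolding G2e using g2i gi by simp
  have G0: "(\<integral>x. G x \<partial>P) = 0" unfolding G_def using gi by (simp add: m_def P.prob_space)
  have EG2: "(\<integral>x. (G x)\<^sup>2 \<partial>P) \<le> a * V"
  proof -
    have "(\<integral>x. (G x)\<^sup>2 \<partial>P) = (\<integral>x. (g x)\<^sup>2 \<partial>P) - 2 * m * m + m\<^sup>2"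
      unfolding G2e using g2i gi by (simp add: m_def P.prob_space)
    also have "\<dots> \<le> (\<integral>x. (g x)\<^sup>2 \<partial>P)" by (simp add: power2_eq_square)
    finally show ?thesis using Eg2 by simp
  qed
  define K where "K = (\<integral>x. max (r x - a) 0 \<partial>P)"
  have K0: "K \<ge> 0" unfolding K_def by simp
  have minri: "integrable P (\<lambda>x. min (r x) a)"
    by (rule P.integrable_const_bound[where B=a]) (use r0 a0 in auto)
  have K_SP: "K = SP P Q a"
  proof -
    have "(\<lambda>x. max (r x - a) 0) = (\<lambda>x. r x - min (r x) a)" by (auto simp: fun_eq_iff max_def min_def)
    hence "K = (\<integral>x. r x \<partial>P) - (\<integral>x. min (r x) a \<partial>P)" unfolding K_def using ri minri by simp
    also have "(\<integral>x. min (r x) a \<partial>P) = (LBINT \<eta>=0..a. measure P {x \<in> space P. r x \<ge> \<eta>})"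
      by (rule P.layer_cake_min[symmetric]) (use r0 a0 in auto)
    also have "(\<integral>x. r x \<partial>P) = 1" by (rule r1)
    finally show ?thesis unfolding SP_def WP_def wP_def r_def by simp
  qed
  have Ee: "(\<integral>x. \<bar>e x\<bar> \<partial>P) \<le> sqrt (V * K)"
  proof (rule amgm_bound[OF V0 K0])
    fix s :: real assume s: "s > 0"
    have pt: "\<bar>e x\<bar> \<le> (s * (r x * (\<phi> x)\<^sup>2) + max (r x - a) 0 / s) / 2" for x
    proof -
      define p where "p = max (r x - a) 0"
      have p0: "p \<ge> 0" and pr: "p \<le> r x" unfolding p_def using a0 r0[of x] by auto
      have "\<bar>e x\<bar> = p * \<bar>\<phi> x\<bar>" unfolding e_def p_def by (simp add: abs_mult)
      also have "\<dots> \<le> p * ((s * (\<phi> x)\<^sup>2 + 1 / s) / 2)"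
        by (rule mult_left_mono[OF amgm_pt[OF s] p0])
      also have "\<dots> = (s * (p * (\<phi> x)\<^sup>2) + p / s) / 2" by (simp add: algebra_simps)
      also have "\<dots> \<le> (s * (r x * (\<phi> x)\<^sup>2) + p / s) / 2"
        using mult_right_mono[OF pr, of "(\<phi> x)\<^sup>2"] s by simp
      finally show ?thesis unfolding p_def .
    qed
    have maxi: "integrable P (\<lambda>x. max (r x - a) 0)"
    proof -
      have "(\<lambda>x. max (r x - a) 0) = (\<lambda>x. r x - min (r x) a)" by (auto simp: fun_eq_iff max_def min_def)
      thus ?thesis using ri minri by simp
    qed
    have "(\<integral>x. \<bar>e x\<bar> \<partial>P) \<le> (\<integral>x. (s * (r x * (\<phi> x)\<^sup>2) + max (r x - a) 0 / s) / 2 \<partial>P)"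
      by (rule integral_mono) (use ei rphi2 maxi pt in auto)
    also have "\<dots> = (s * V + K / s) / 2"
      unfolding V_eq K_def using rphi2 maxi by simp
    finally show "(\<integral>x. \<bar>e x\<bar> \<partial>P) \<le> (s * V + K / s) / 2" .
  qed
  let ?M = "PiM {..<n} (\<lambda>_. P)"
  interpret PS: product_prob_space "\<lambda>_. P" "{..<n}" by unfold_locales
  define A where "A \<omega> = (1 / real n) * (\<Sum>i<n. G (\<omega> i))" for \<omega>
  have Ai: "integrable ?M A" unfolding A_def by (rule P.avg_abs_bound(1)[OF assms(10) Gi G2i G0])
  have EA: "(\<integral>\<omega>. \<bar>A \<omega>\<bar> \<partial>?M) \<le> sqrt (a * V / real n)"
  proof -
    have "(\<integral>\<omega>. \<bar>A \<omega>\<bar> \<partial>?M) \<le> sqrt ((\<integral>x. (G x)\<^sup>2 \<partial>P) / real n)"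
      unfolding A_def by (rule P.avg_abs_bound(2)[OF assms(10) Gi G2i G0])
    also have "\<dots> \<le> sqrt (a * V / real n)"
      using EG2 assms(10) by (simp add: divide_right_mono)
    finally show ?thesis .
  qed
  have one: "integrable P (\<lambda>x. f x * 1)" if "integrable P f" for f :: "'a \<Rightarrow> real" using that by simp
  have coord: "integrable ?M (\<lambda>\<omega>. f (\<omega> i))" "(\<integral>\<omega>. f (\<omega> i) \<partial>?M) = (\<integral>x. f x \<partial>P)"
    if "integrable P f" "i < n" for f :: "'a \<Rightarrow> real" and i
    using P.PiM_pair[of "{..<n}" i i f "\<lambda>_. 1", OF _ _ _ that(1) _ one[OF that(1)]] that by simp_all
  have eai: "integrable P (\<lambda>x. \<bar>e x\<bar>)" using ei by simp
  define D where "D \<omega> = (1 / real n) * (\<Sum>i<n. \<phi> (\<omega> i) * r (\<omega> i)) - (\<integral>x. \<phi> x \<partial>Q)" for \<omega>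
  have phir: "integrable P (\<lambda>x. \<phi> x * r x)" using rphi by (simp add: mult.commute)
  have Di: "integrable ?M D" unfolding D_def
    by (intro Bochner_Integration.integrable_diff integrable_mult_right Bochner_Integration.integrable_sum
        coord(1)[OF phir]) auto
  have Bi: "integrable ?M (\<lambda>\<omega>. \<bar>A \<omega>\<bar> + (1 / real n) * (\<Sum>i<n. \<bar>e (\<omega> i)\<bar>) + \<bar>\<integral>x. e x \<partial>P\<bar>)"
    by (intro Bochner_Integration.integrable_add integrable_mult_right Bochner_Integration.integrable_sum
        coord(1)[OF eai] integrable_abs Ai) auto
  have mu2: "(\<integral>x. \<phi> x \<partial>Q) = m + (\<integral>x. e x \<partial>P)"
    unfolding mu_eq ge m_def using gi ei by simp
  have Dpt: "\<bar>D \<omega>\<bar> \<le> \<bar>A \<omega>\<bar> + (1 / real n) * (\<Sum>i<n. \<bar>e (\<omega> i)\<bar>) + \<bar>\<integral>x. e x \<partial>P\<bar>" for \<omega>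
  proof -
    have "D \<omega> = A \<omega> + (1 / real n) * (\<Sum>i<n. e (\<omega> i)) - (\<integral>x. e x \<partial>P)"
    proof -
      have "(\<Sum>i<n. \<phi> (\<omega> i) * r (\<omega> i)) = (\<Sum>i<n. G (\<omega> i)) + (\<Sum>i<n. e (\<omega> i)) + real n * m"
        using ge by (simp add: G_def sum.distrib sum_subtractf mult.commute)
      thus ?thesis unfolding D_def A_def mu2 using assms(10) by (simp add: algebra_simps)
    qed
    moreover have "\<bar>(1 / real n) * (\<Sum>i<n. e (\<omega> i))\<bar> \<le> (1 / real n) * (\<Sum>i<n. \<bar>e (\<omega> i)\<bar>)"
      by (simp add: abs_mult sum_abs divide_right_mono)
    ultimately show ?thesis by linarith
  qed
  have "(\<integral>\<omega>. \<bar>D \<omega>\<bar> \<partial>?M) \<le> (\<integral>\<omega>. \<bar>A \<omega>\<bar> + (1 / real n) * (\<Sum>i<n. \<bar>e (\<omega> i)\<bar>) + \<bar>\<integral>x. e x \<partial>P\<bar> \<partial>?M)"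
    by (rule integral_mono[OF _ Bi Dpt]) (use Di in simp)
  also have "\<dots> = (\<integral>\<omega>. \<bar>A \<omega>\<bar> \<partial>?M) + (1 / real n) * (\<Sum>i<n. (\<integral>\<omega>. \<bar>e (\<omega> i)\<bar> \<partial>?M)) + \<bar>\<integral>x. e x \<partial>P\<bar>"
  proof -
    have i1: "integrable ?M (\<lambda>\<omega>. \<bar>A \<omega>\<bar>)" using Ai by simp
    have i2: "integrable ?M (\<lambda>\<omega>. (1 / real n) * (\<Sum>i<n. \<bar>e (\<omega> i)\<bar>))"
      by (intro integrable_mult_right Bochner_Integration.integrable_sum coord(1)[OF eai]) auto
    have "(\<integral>\<omega>. (\<Sum>i<n. \<bar>e (\<omega> i)\<bar>) \<partial>?M) = (\<Sum>i<n. (\<integral>\<omega>. \<bar>e (\<omega> i)\<bar> \<partial>?M))"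
      by (rule Bochner_Integration.integral_sum) (use coord(1)[OF eai] in auto)
    thus ?thesis using i1 i2 by (simp add: PS.P.prob_space)
  qed
  also have "(\<Sum>i<n. (\<integral>\<omega>. \<bar>e (\<omega> i)\<bar> \<partial>?M)) = real n * (\<integral>x. \<bar>e x\<bar> \<partial>P)"
    using coord(2)[OF eai] by simp
  also have "(1 / real n) * (real n * (\<integral>x. \<bar>e x\<bar> \<partial>P)) = (\<integral>x. \<bar>e x\<bar> \<partial>P)"
    using assms(10) by simp
  also have "\<bar>\<integral>x. e x \<partial>P\<bar> \<le> (\<integral>x. \<bar>e x\<bar> \<partial>P)" by (rule integral_abs_bound)
  finally have ED: "(\<integral>\<omega>. \<bar>D \<omega>\<bar> \<partial>?M) \<le> sqrt (a * V / real n) + 2 * sqrt (V * K)"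
    using EA Ee by linarith
  have an: "a / real n = 2 powr (- t / 2)"
    unfolding a_def assms(11) L_def by (simp add: powr_diff[symmetric])
  have "sqrt (a * V / real n) = sqrt V * 2 powr (- t / 4)"
  proof -
    have "sqrt (a / real n) = 2 powr (- t / 4)"
      unfolding an by (simp add: powr_half_sqrt[symmetric] powr_powr)
    moreover have "a * V / real n = V * (a / real n)" by simp
    ultimately show ?thesis by (simp only: real_sqrt_mult)
  qed
  hence ED2: "(\<integral>\<omega>. \<bar>D \<omega>\<bar> \<partial>?M) \<le> sqrt V * (2 powr (- t / 4) + 2 * sqrt K)"
    using ED by (simp add: real_sqrt_mult algebra_simps)
  have "(\<integral>\<^sup>+ \<omega>. ennreal \<bar>D \<omega>\<bar> \<partial>?M) = ennreal (\<integral>\<omega>. \<bar>D \<omega>\<bar> \<partial>?M)"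
    by (rule nn_integral_eq_integral) (use Di in auto)
  also have "\<dots> \<le> ennreal (sqrt V * (2 powr (- t / 4) + 2 * sqrt K))"
    by (rule ennreal_leI[OF ED2])
  finally show ?thesis unfolding D_def r_def V_def K_SP a_def L_def .
qed
end
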